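(* Let $n$ be a positive integer, let $\mathfrak A=(A_1,\dots,A_k)$ be an ordered partition of $[n]$ into nonempty blocks with length-vector $(\ell_1,\dots,\ell_{k-1})=(|A_1|,\dots,|A_{k-1}|)$, and let $\mathbf a\colon[n]\to[n]$ be such that $\operatorname{coim}(\mathbf a)=\mathfrak A$. Then $\mathbf a$ is a parking function if and only if $\operatorname{rim}(\mathbf a)\in\langle\ell_1,\dots,\ell_{k-1}\rangle$; and $\mathbf a$ is a parking function with $\operatorname{run}(\mathbf a)=r$ if and only if $\operatorname{rim}(\mathbf a)=(0,1,\dots,r-1,x_{r+1},\dots,x_k)$ for some integers $x_{r+1},\dots,x_k$ with $$(0,x_{r+1}-r,\dots,x_k-r)\in\Big\langle \Big(\sum_{i=1}^r\ell_i\Big)-r,\ \ell_{r+1},\dots,\ell_{k-1}\Big\rangle.$$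
   Context: Let $[n]=\{1,\dots,n\}$. A parking function of length $n$ is $\mathbf a=(a_1,\dots,a_n)\in[n]^n$ with $|\{j:a_j\le i\}|\ge i$ for every $i\in[n]$. If $1\in\{a_1,\dots,a_n\}$, $\operatorname{run}(\mathbf a)=\max\{i\in[n]:[i]\subseteq\{a_1,\dots,a_n\}\}$; otherwise $\operatorname{run}(\mathbf a)=0$. If $\{a_1,\dots,a_n\}=\{x_1<\dots<x_k\}$, the reduced image is $\operatorname{rim}(\mathbf a)=(x_1-1,\dots,x_k-1)$, and the coimage $\operatorname{coim}(\mathbf a)$ is the set of fibers $\mathbf a^{-1}(\{x_j\})$, ordered by increasing value $x_j$, viewed as an ordered partition of $[n]$. For integers $\ell_1,\dots,\ell_m$ with partial sums $L_i=\ell_1+\dots+\ell_i$, $\langle\ell_1,\dots,\ell_m\rangle=\{(x_0,\dots,x_m)\in\mathbb Z^{m+1}: x_0=0,\ x_{i-1}<x_i\le L_i\ \forall\, 1\le i\le m\}$. *)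

theory Defs
  imports Main
begin

text \<open>Functions [n] -> [n] are modelled as a :: nat => nat; only values on {1..n} matter.\<close>

definition parking_function :: "nat \<Rightarrow> (nat \<Rightarrow> nat) \<Rightarrow> bool" where
  "parking_function n a \<longleftrightarrow>
     (\<forall>j\<in>{1..n}. a j \<in> {1..n}) \<and>
     (\<forall>i\<in>{1..n}. card {j\<in>{1..n}. a j \<le> i} \<ge> i)"

definition run :: "nat \<Rightarrow> (nat \<Rightarrow> nat) \<Rightarrow> nat" where
  "run n a = (if 1 \<in> a ` {1..n} then Max {i\<in>{1..n}. {1..i} \<subseteq> a ` {1..n}} else 0)"

definition rim :: "nat \<Rightarrow> (nat \<Rightarrow> nat) \<Rightarrow> int list" where
  "rim n a = map (\<lambda>x. int x - 1) (sorted_list_of_set (a ` {1..n}))"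

definition coim :: "nat \<Rightarrow> (nat \<Rightarrow> nat) \<Rightarrow> nat set list" where
  "coim n a = map (\<lambda>x. {j\<in>{1..n}. a j = x}) (sorted_list_of_set (a ` {1..n}))"

definition ordered_partition :: "nat \<Rightarrow> nat set list \<Rightarrow> bool" where
  "ordered_partition n As \<longleftrightarrow>
     (\<forall>A\<in>set As. A \<noteq> {}) \<and>
     (\<forall>i<length As. \<forall>j<length As. i \<noteq> j \<longrightarrow> As ! i \<inter> As ! j = {}) \<and>
     \<Union>(set As) = {1..n}"

text \<open>box ls = <l_1,...,l_m>: tuples (x_0,...,x_m) (as a list, x_i = xs!i) with x_0 = 0 and
  x_{i-1} < x_i <= l_1+...+l_i for 1 <= i <= m.\<close>
definition box :: "int list \<Rightarrow> int list set" where
  "box ls = {xs. length xs = length ls + 1 \<and> xs ! 0 = 0 \<and>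
     (\<forall>i\<in>{1..length ls}. xs ! (i - 1) < xs ! i \<and> xs ! i \<le> sum_list (take i ls))}"

end

theory Submission imports Defs begin

lemma sw_less_iff:
  assumes "sorted_wrt (<) (s::nat list)" "i < length s" "j < length s"
  shows "s!i < s!j \<longleftrightarrow> i < j"
  using assms sorted_wrt_nth_less[OF assms(1), of i j] sorted_wrt_nth_less[OF assms(1), of j i]
  by (cases "i < j"; cases "j < i") auto

lemma sw_set_take:
  assumes "sorted_wrt (<) (s::nat list)" "i < length s"
  shows "set (take i s) = {x \<in> set s. x < s!i}"
proof -
  have "x \<in> set (take i s) \<longleftrightarrow> x \<in> set s \<and> x < s!i" for x
  proof
    assume "x \<in> set (take i s)"
    then obtain t where "t < length (take i s)" "x = take i s ! t" by (auto simp: in_set_conv_nth)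
    then show "x \<in> set s \<and> x < s!i" using assms sw_less_iff[OF assms(1), of t i] by auto
  next
    assume "x \<in> set s \<and> x < s!i"
    then obtain t where t: "t < length s" "x = s ! t" "x < s!i" by (auto simp: in_set_conv_nth)
    then have "t < i" using sw_less_iff[OF assms(1) t(1) assms(2)] by simp
    then show "x \<in> set (take i s)" using t by (auto simp: in_set_conv_nth intro!: exI[of _ t])
  qed
  then show ?thesis by auto
qed

lemma sw_nth_ge:
  assumes "sorted_wrt (<) (s::nat list)" "\<forall>x\<in>set s. x \<ge> 1" "j < length s"
  shows "s!j \<ge> j+1"
  using assms(3)
proof (induction j)
  case 0 then show ?case using assms(2) nth_mem[of 0 s] by auto
next
  case (Suc j)
  then have "s!j < s!Suc j" using sorted_wrt_nth_less[OF assms(1)] by auto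
  then show ?case using Suc by auto
qed

lemma sw_prefix:
  assumes "sorted_wrt (<) (s::nat list)" "\<forall>x\<in>set s. x \<ge> 1"
  shows "{1..i} \<subseteq> set s \<longleftrightarrow> i \<le> length s \<and> (\<forall>j<i. s!j = j+1)"
proof
  assume h: "{1..i} \<subseteq> set s"
  have d: "distinct s" using assms(1) strict_sorted_iff by blast
  have "card {1..i} \<le> card (set s)" using h by (intro card_mono) auto
  then have il: "i \<le> length s" using distinct_card[OF d] by simp
  have "\<forall>j<i. s!j = j+1"
  proof (intro allI impI)
    fix j assume "j < i"
    then show "s!j = j+1"
    proof (induction j rule: less_induct)
      case (less j)
      have "j+1 \<in> set s" using h less by auto
      then obtain t where t: "t < length s" "s!t = j+1" by (auto simp: in_set_conv_nth)
      have "t \<le> j" using sw_nth_ge[OF assms t(1)] t by simp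
      moreover have "\<not> t < j"
      proof
        assume "t < j" then have "s!t = t+1" using less by auto
        then show False using t \<open>t<j\<close> by simp
      qed
      ultimately show ?case using t by (cases "t = j") auto
    qed
  qed
  then show "i \<le> length s \<and> (\<forall>j<i. s!j = j+1)" using il by simp
next
  assume h: "i \<le> length s \<and> (\<forall>j<i. s!j = j+1)"
  show "{1..i} \<subseteq> set s"
  proof
    fix x assume "x \<in> {1..i}"
    then have "x - 1 < i" "s!(x-1) = x" using h by auto
    then show "x \<in> set s" using h by (metis less_le_trans nth_mem)
  qed
qed


locale pfs =
  fixes n :: nat and a :: "nat \<Rightarrow> nat"
  assumes npos: "n > 0" and arng: "\<forall>j\<in>{1..n}. a j \<in> {1..n}"
begin

definition "V = a ` {1..n}"
definition "s = sorted_list_of_set V"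
definition "k = length s"
definition "G x = card {j\<in>{1..n}. a j < x}"
definition "fib x = {j\<in>{1..n}. a j = x}"

lemma V_sub: "V \<subseteq> {1..n}" using arng by (auto simp: V_def)
lemma V_fin: "finite V" by (simp add: V_def)
lemma V_ne: "V \<noteq> {}" using npos by (auto simp: V_def)
lemma set_s: "set s = V" by (simp add: s_def V_fin)
lemma sw_s: "sorted_wrt (<) s" by (simp add: s_def strict_sorted_list_of_set)
lemma dist_s: "distinct s" using sw_s strict_sorted_iff by blast
lemma k_card: "k = card V" by (simp add: k_def s_def)
lemma k_pos: "k \<ge> 1" using V_ne V_fin k_card by (simp add: Suc_le_eq card_gt_0_iff)
lemma k_le: "k \<le> n" using k_card card_mono[OF _ V_sub] by (simp add: card_mono[OF _ V_sub])
lemma s_ge1: "\<forall>x\<in>set s. x \<ge> 1" using V_sub set_s by auto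
lemma s_le: "\<forall>x\<in>set s. x \<le> n" using V_sub set_s by auto

lemma rim_eq: "rim n a = map (\<lambda>x. int x - 1) s" by (simp add: rim_def s_def V_def)
lemma coim_eq: "coim n a = map fib s" by (simp add: coim_def s_def V_def fib_def)

lemma s0: "1 \<in> V \<longleftrightarrow> s!0 = 1"
proof
  assume "1 \<in> V"
  then obtain t where t: "t < k" "s!t = 1" using set_s unfolding k_def by (metis in_set_conv_nth)
  have "t + 1 \<le> s!t" using sw_nth_ge[OF sw_s s_ge1, of t] t by (simp add: k_def)
  then have "t = 0" using t by simp
  then show "s!0 = 1" using t by simp
next
  assume "s!0 = 1"
  have "0 < length s" using k_pos k_def by linarith
  then have "s!0 \<in> set s" by (rule nth_mem)
  then show "1 \<in> V" using \<open>s!0 = 1\<close> set_s by simp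
qed

lemma parking_char: "parking_function n a \<longleftrightarrow> 1 \<in> V \<and> (\<forall>x\<in>V. x \<le> G x + 1)"
proof
  assume pf: "parking_function n a"
  then have c: "\<forall>i\<in>{1..n}. card {j\<in>{1..n}. a j \<le> i} \<ge> i" by (simp add: parking_function_def)
  have "card {j\<in>{1..n}. a j \<le> 1} \<ge> 1" using c npos by auto
  then have "{j\<in>{1..n}. a j \<le> 1} \<noteq> {}"
  proof (intro notI)
    assume "{j\<in>{1..n}. a j \<le> 1} = {}"
    then have "card {j\<in>{1..n}. a j \<le> 1} = 0" by (simp only: card.empty)
    then show False using \<open>card {j\<in>{1..n}. a j \<le> 1} \<ge> 1\<close> by linarith
  qed
  then obtain j where "j \<in> {1..n}" "a j \<le> 1" by blast
  then have "a j = 1" using arng by force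
  then have "1 \<in> V" unfolding V_def using \<open>j \<in> {1..n}\<close> by (metis image_eqI)
  moreover have "x \<le> G x + 1" if "x \<in> V" for x
  proof (cases "x = 1")
    case False
    have "x \<in> {1..n}" using that V_sub by auto
    then have "x - 1 \<in> {1..n}" "x \<ge> 1" using False by auto
    then have "card {j\<in>{1..n}. a j \<le> x - 1} \<ge> x - 1" using c by blast
    moreover have "{j\<in>{1..n}. a j \<le> x - 1} = {j\<in>{1..n}. a j < x}" using \<open>x \<ge> 1\<close> by auto
    ultimately show ?thesis by (simp add: G_def)
  qed simp
  ultimately show "1 \<in> V \<and> (\<forall>x\<in>V. x \<le> G x + 1)" by blast
next
  assume h: "1 \<in> V \<and> (\<forall>x\<in>V. x \<le> G x + 1)"
  have "card {j\<in>{1..n}. a j \<le> m} \<ge> m" if m: "m \<in> {1..n}" for m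
  proof (cases "{x\<in>V. m < x} = {}")
    case True
    then have "{j\<in>{1..n}. a j \<le> m} = {1..n}" by (auto simp: V_def)
    then show ?thesis using m by simp
  next
    case False
    define x where "x = Min {x\<in>V. m < x}"
    have fin: "finite {x\<in>V. m < x}" using V_fin by simp
    have xin: "x \<in> V" "m < x" using Min_in[OF fin False] by (auto simp: x_def)
    have eq: "{j\<in>{1..n}. a j \<le> m} = {j\<in>{1..n}. a j < x}"
    proof (intro Collect_cong conj_cong refl iffI)
      fix j assume j: "j \<in> {1..n}" "a j < x"
      show "a j \<le> m"
      proof (rule ccontr)
        assume "\<not> a j \<le> m"
        then have "a j \<in> {x\<in>V. m < x}" using j by (auto simp: V_def)
        then have "x \<le> a j" using Min_le[OF fin] by (simp add: x_def)
        then show False using j by simp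
      qed
    next
      fix j assume "a j \<le> m" then show "a j < x" using xin by simp
    qed
    have "x \<le> G x + 1" using h xin by blast
    then show ?thesis using eq xin by (simp add: G_def)
  qed
  then show "parking_function n a" using arng by (simp add: parking_function_def)
qed

lemma G_sum:
  assumes "i < k"
  shows "sum_list (take i (map (\<lambda>A. int (card A)) (butlast (coim n a)))) = int (G (s!i))"
proof -
  have "take i (map (\<lambda>A. int (card A)) (butlast (coim n a))) = map (\<lambda>x. int (card (fib x))) (take i s)"
    using assms by (simp add: coim_eq map_butlast[symmetric] take_map take_butlast k_def del: map_butlast)
  then have "sum_list (take i (map (\<lambda>A. int (card A)) (butlast (coim n a)))) =
       (\<Sum>x\<in>set (take i s). int (card (fib x)))"
    using dist_s by (simp add: sum_list_distinct_conv_sum_set)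
  also have "set (take i s) = {x\<in>V. x < s!i}" using sw_set_take[OF sw_s] assms set_s by (simp add: k_def)
  also have "(\<Sum>x\<in>{x\<in>V. x < s!i}. int (card (fib x))) = int (\<Sum>x\<in>{x\<in>V. x < s!i}. card (fib x))"
    by simp
  also have "(\<Sum>x\<in>{x\<in>V. x < s!i}. card (fib x)) = card (\<Union>x\<in>{x\<in>V. x < s!i}. fib x)"
    by (rule card_UN_disjoint[symmetric]) (auto simp: V_fin fib_def)
  also have "(\<Union>x\<in>{x\<in>V. x < s!i}. fib x) = {j\<in>{1..n}. a j < s!i}"
    by (auto simp: fib_def V_def)
  finally show ?thesis by (simp add: G_def)
qed

lemma G_ge:
  assumes "i < k" shows "G (s!i) \<ge> i"
proof -
  have "a ` {j\<in>{1..n}. a j < s!i} = {x\<in>V. x < s!i}" by (auto simp: V_def)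
  also have "\<dots> = set (take i s)" using sw_set_take[OF sw_s] assms set_s by (simp add: k_def)
  finally have e: "a ` {j\<in>{1..n}. a j < s!i} = set (take i s)" .
  have "card (a ` {j\<in>{1..n}. a j < s!i}) \<le> card {j\<in>{1..n}. a j < s!i}" by (rule card_image_le) simp
  then have "card (set (take i s)) \<le> G (s!i)" unfolding G_def e .
  moreover have "card (set (take i s)) = i" using assms dist_s by (simp add: distinct_card k_def)
  ultimately show ?thesis by simp
qed


lemma run_char:
  assumes one: "1 \<in> V"
  shows "run n a = r \<longleftrightarrow> r \<le> k \<and> (\<forall>j<r. s!j = j+1) \<and> (r < k \<longrightarrow> s!r > r+1)"
proof -
  define P where "P i \<longleftrightarrow> i \<le> k \<and> (\<forall>j<i. s!j = j+1)" for i
  have pref: "{1..i} \<subseteq> V \<longleftrightarrow> P i" for i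
    using sw_prefix[OF sw_s s_ge1, of i] set_s by (simp add: P_def k_def)
  define S where "S = {i\<in>{1..n}. {1..i} \<subseteq> V}"
  have runS: "run n a = Max S" using one by (simp add: run_def S_def V_def)
  have fin: "finite S" by (simp add: S_def)
  have "1 \<in> S" using one npos by (auto simp: S_def)
  then have ne: "S \<noteq> {}" by blast
  have s0': "s!0 = 1" using s0 one by simp
  have ge: "j < k \<Longrightarrow> s!j \<ge> j+1" for j using sw_nth_ge[OF sw_s s_ge1] by (simp add: k_def)
  have "Max S = r \<longleftrightarrow> r \<le> k \<and> (\<forall>j<r. s!j = j+1) \<and> (r < k \<longrightarrow> s!r > r+1)"
    unfolding Max_eq_iff[OF fin ne]
  proof
    assume h: "r \<in> S \<and> (\<forall>i\<in>S. i \<le> r)"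
    then have Pr: "P r" using pref by (simp add: S_def)
    have "s!r > r+1" if rk: "r < k"
    proof (rule ccontr)
      assume "\<not> s!r > r+1"
      then have "s!r = r+1" using ge[OF rk] by simp
      then have "P (r+1)" using Pr rk by (auto simp: P_def less_Suc_eq)
      moreover have "r+1 \<le> n" using rk k_le by simp
      ultimately have "r+1 \<in> S" using pref by (simp add: S_def)
      then show False using h by auto
    qed
    then show "r \<le> k \<and> (\<forall>j<r. s!j = j+1) \<and> (r < k \<longrightarrow> s!r > r+1)" using Pr by (simp add: P_def)
  next
    assume h: "r \<le> k \<and> (\<forall>j<r. s!j = j+1) \<and> (r < k \<longrightarrow> s!r > r+1)"
    have "r \<noteq> 0"
    proof
      assume "r = 0" then show False using h s0' k_pos by simp
    qed
    then have "r \<in> S" using h pref k_le by (simp add: S_def P_def)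
    moreover have "i \<le> r" if "i \<in> S" for i
    proof (rule ccontr)
      assume "\<not> i \<le> r"
      have "P i" using that pref by (simp add: S_def)
      then have "r < k" "s!r = r+1" using \<open>\<not> i \<le> r\<close> by (auto simp: P_def)
      then show False using h by simp
    qed
    ultimately show "r \<in> S \<and> (\<forall>i\<in>S. i \<le> r)" by blast
  qed
  then show ?thesis using runS by simp
qed

definition "ls = map (\<lambda>A. int (card A)) (butlast (coim n a))"
lemma length_ls: "length ls = k - 1" by (simp add: ls_def coim_eq k_def)
lemma ls_sum: "i < k \<Longrightarrow> sum_list (take i ls) = int (G (s!i))" using G_sum by (simp add: ls_def)
lemma length_rim: "length (rim n a) = k" by (simp add: rim_eq k_def)
lemma rim_nth: "i < k \<Longrightarrow> rim n a ! i = int (s!i) - 1" by (simp add: rim_eq k_def)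
lemma s_mono: "i < j \<Longrightarrow> j < k \<Longrightarrow> s!i < s!j" using sorted_wrt_nth_less[OF sw_s] by (simp add: k_def)

lemma box1: "rim n a \<in> box ls \<longleftrightarrow> s!0 = 1 \<and> (\<forall>i<k. s!i \<le> G (s!i) + 1)"
proof -
  have "rim n a \<in> box ls \<longleftrightarrow> s!0 = 1 \<and> (\<forall>i\<in>{1..k-1}. s!i \<le> G (s!i) + 1)"
  proof -
    have A: "(rim n a ! (i-1) < rim n a ! i \<and> rim n a ! i \<le> sum_list (take i ls)) \<longleftrightarrow> s!i \<le> G (s!i) + 1"
      if "i \<in> {1..k-1}" for i
    proof -
      have "i < k" "i - 1 < i" using that by auto
      then have "rim n a ! (i-1) < rim n a ! i" using rim_nth s_mono[of "i-1" i] by simp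
      moreover have "rim n a ! i \<le> sum_list (take i ls) \<longleftrightarrow> s!i \<le> G (s!i) + 1"
        using rim_nth[OF \<open>i<k\<close>] ls_sum[OF \<open>i<k\<close>] by (simp; arith)
      ultimately show ?thesis by simp
    qed
    have B: "rim n a ! 0 = 0 \<longleftrightarrow> s!0 = 1" using rim_nth[of 0] k_pos by simp
    show ?thesis unfolding box_def using A B length_rim length_ls k_pos
      by (simp del: One_nat_def)
  qed
  also have "\<dots> \<longleftrightarrow> s!0 = 1 \<and> (\<forall>i<k. s!i \<le> G (s!i) + 1)"
  proof -
    have "(\<forall>i\<in>{1..k-1}. s!i \<le> G (s!i) + 1) \<longleftrightarrow> (\<forall>i<k. i \<noteq> 0 \<longrightarrow> s!i \<le> G (s!i) + 1)"
      by (auto; metis One_nat_def Suc_pred leI le_zero_eq less_Suc_eq_le not_less_eq_eq)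
    then show ?thesis by (metis le_add2)
  qed
  finally show ?thesis .
qed

lemma ex_split:
  "(\<exists>xs. R = p @ xs \<and> \<Phi> xs) \<longleftrightarrow> take (length p) R = p \<and> \<Phi> (drop (length p) R)"
  by (metis append_eq_conv_conj append_take_drop_id)

lemma take_prefix: "take r (rim n a) = map int [0..<r] \<longleftrightarrow> r \<le> k \<and> (\<forall>j<r. s!j = j+1)"
proof -
  have "take r (rim n a) = map int [0..<r] \<longleftrightarrow> r \<le> k \<and> (\<forall>j<r. rim n a ! j = int j)"
    by (auto simp: list_eq_iff_nth_eq length_rim min_def)
  also have "\<dots> \<longleftrightarrow> r \<le> k \<and> (\<forall>j<r. s!j = j+1)"
    using rim_nth by auto
  finally show ?thesis .
qed

lemma sum_ms:
  assumes "r \<le> k" "i \<in> {1..k-r}"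
  shows "sum_list (take i (take (k - r) ((sum_list (take r ls) - int r) # drop r ls))) = int (G (s!(r+i-1))) - int r"
proof -
  have rk: "r < k" "r + i - 1 < k" using assms by auto
  have "take i (take (k - r) ((sum_list (take r ls) - int r) # drop r ls)) = take i ((sum_list (take r ls) - int r) # drop r ls)"
    using assms by (simp add: min_def)
  also have "\<dots> = (sum_list (take r ls) - int r) # take (i-1) (drop r ls)"
    using assms by (cases i) auto
  finally have "sum_list (take i (take (k - r) ((sum_list (take r ls) - int r) # drop r ls))) =
     sum_list (take r ls) - int r + sum_list (take (i-1) (drop r ls))" by simp
  also have "sum_list (take r ls) + sum_list (take (i-1) (drop r ls)) = sum_list (take (r+i-1) ls)"
  proof -
    have "take (r+i-1) ls = take r ls @ take (i-1) (drop r ls)"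
      using assms by (metis add_diff_assoc atLeastAtMost_iff take_add)
    then show ?thesis by simp
  qed
  then have "sum_list (take r ls) - int r + sum_list (take (i-1) (drop r ls)) = sum_list (take (r+i-1) ls) - int r"
    by simp
  also have "\<dots> = int (G (s!(r+i-1))) - int r" using ls_sum[OF rk(2)] by simp
  finally show ?thesis .
qed


lemma reidx:
  assumes "r \<le> k"
  shows "(\<forall>i\<in>{1..k-r}. (i = 1 \<longrightarrow> s!r > r+1) \<and> s!(r+i-1) \<le> G (s!(r+i-1)) + 1) \<longleftrightarrow>
     (r < k \<longrightarrow> s!r > r+1) \<and> (\<forall>j. r \<le> j \<longrightarrow> j < k \<longrightarrow> s!j \<le> G (s!j) + 1)"
proof (rule iffI)
  assume h: "\<forall>i\<in>{1..k-r}. (i = 1 \<longrightarrow> s!r > r+1) \<and> s!(r+i-1) \<le> G (s!(r+i-1)) + 1"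
  have A: "s!r > r+1" if "r < k"
  proof -
    have "(1::nat) \<in> {1..k-r}" using that by simp
    then show ?thesis using h by fastforce
  qed
  have B: "s!j \<le> G (s!j) + 1" if hj: "r \<le> j" "j < k" for j
  proof -
    have "j - r + 1 \<in> {1..k-r}" using hj by auto
    then have "s!(r+(j-r+1)-1) \<le> G (s!(r+(j-r+1)-1)) + 1" using h by blast
    moreover have "r+(j-r+1)-1 = j" using hj by simp
    ultimately show ?thesis by simp
  qed
  show "(r < k \<longrightarrow> s!r > r+1) \<and> (\<forall>j. r \<le> j \<longrightarrow> j < k \<longrightarrow> s!j \<le> G (s!j) + 1)" using A B by blast
next
  assume h: "(r < k \<longrightarrow> s!r > r+1) \<and> (\<forall>j. r \<le> j \<longrightarrow> j < k \<longrightarrow> s!j \<le> G (s!j) + 1)"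

  show "\<forall>i\<in>{1..k-r}. (i = 1 \<longrightarrow> s!r > r+1) \<and> s!(r+i-1) \<le> G (s!(r+i-1)) + 1"
  proof
    fix i assume i: "i \<in> {1..k-r}"
    have "r < k" "r \<le> r+i-1" "r+i-1 < k" using i by auto
    then show "(i = 1 \<longrightarrow> s!r > r+1) \<and> s!(r+i-1) \<le> G (s!(r+i-1)) + 1" using h by auto
  qed
qed

lemma box2_aux:
  assumes "r \<le> k"
  shows "0 # map (\<lambda>x. x - int r) (drop r (rim n a)) \<in> box (take (k - r) ((sum_list (take r ls) - int r) # drop r ls))
     \<longleftrightarrow> (r < k \<longrightarrow> s!r > r+1) \<and> (\<forall>j. r \<le> j \<longrightarrow> j < k \<longrightarrow> s!j \<le> G (s!j) + 1)"
proof -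
  define ys where "ys = 0 # map (\<lambda>x. x - int r) (drop r (rim n a))"
  define ms where "ms = take (k - r) ((sum_list (take r ls) - int r) # drop r ls)"
  have lms: "length ms = k - r" using assms k_pos by (cases "r < k") (auto simp: ms_def length_ls min_def)
  have lys: "length ys = length ms + 1" using lms assms by (simp add: ys_def length_rim)
  have ys0: "ys!0 = 0" by (simp add: ys_def)
  have ysi: "ys!i = int (s!(r+i-1)) - 1 - int r" if "i \<in> {1..k-r}" for i
  proof -
    have lt: "r+i-1 < k" "i - 1 < k - r" "0 < i" using that assms by auto
    have "ys!i = map (\<lambda>x. x - int r) (drop r (rim n a)) ! (i-1)"
      unfolding ys_def using lt(3) by (rule nth_Cons_pos)
    also have "\<dots> = (drop r (rim n a)) ! (i-1) - int r" using lt(2) by (simp add: length_rim)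
    also have "(drop r (rim n a)) ! (i-1) = rim n a ! (r+(i-1))" using assms by (simp add: length_rim)
    also have "r+(i-1) = r+i-1" using lt(3) by simp
    also have "rim n a ! (r+i-1) - int r = int (s!(r+i-1)) - 1 - int r" using rim_nth[OF lt(1)] by simp
    finally show ?thesis .
  qed
  have C: "(ys!(i-1) < ys!i \<and> ys!i \<le> sum_list (take i ms)) \<longleftrightarrow>
      (i = 1 \<longrightarrow> s!r > r+1) \<and> s!(r+i-1) \<le> G (s!(r+i-1)) + 1" if "i \<in> {1..k-r}" for i
  proof -
    have eq: "sum_list (take i ms) = int (G (s!(r+i-1))) - int r"
      unfolding ms_def by (rule sum_ms[OF assms that])
    have "ys!i \<le> sum_list (take i ms) \<longleftrightarrow> s!(r+i-1) \<le> G (s!(r+i-1)) + 1"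
      unfolding eq ysi[OF that] by linarith
    moreover have "ys!(i-1) < ys!i \<longleftrightarrow> (i = 1 \<longrightarrow> s!r > r+1)"
    proof (cases "i = 1")
      case True then show ?thesis using ysi[OF that] ys0 by auto
    next
      case False
      then have "i-1 \<in> {1..k-r}" using that by auto
      then have "ys!(i-1) = int (s!(r+(i-1)-1)) - 1 - int r" by (rule ysi)
      moreover have "s!(r+(i-1)-1) < s!(r+i-1)" using that False by (intro s_mono) auto
      ultimately show ?thesis using ysi[OF that] False by simp
    qed
    ultimately show ?thesis by blast
  qed
  have "ys \<in> box ms \<longleftrightarrow> (\<forall>i\<in>{1..k-r}. ys!(i-1) < ys!i \<and> ys!i \<le> sum_list (take i ms))"
    unfolding box_def using lys ys0 lms by simp
  also have "\<dots> \<longleftrightarrow> (\<forall>i\<in>{1..k-r}. (i = 1 \<longrightarrow> s!r > r+1) \<and> s!(r+i-1) \<le> G (s!(r+i-1)) + 1)"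
    by (rule ball_cong[OF refl C])
  also have "\<dots> \<longleftrightarrow> (r < k \<longrightarrow> s!r > r+1) \<and> (\<forall>j. r \<le> j \<longrightarrow> j < k \<longrightarrow> s!j \<le> G (s!j) + 1)"
    using reidx[OF assms] .
  finally show ?thesis unfolding ys_def ms_def .
qed

lemma box2:
  "(\<exists>xs. rim n a = map int [0..<r] @ xs \<and> 0 # map (\<lambda>x. x - int r) xs \<in> box (take (k - r) ((sum_list (take r ls) - int r) # drop r ls)))
   \<longleftrightarrow> r \<le> k \<and> (\<forall>j<r. s!j = j+1) \<and> (r < k \<longrightarrow> s!r > r+1) \<and> (\<forall>j. r \<le> j \<longrightarrow> j < k \<longrightarrow> s!j \<le> G (s!j) + 1)"
proof -
  have "(\<exists>xs. rim n a = map int [0..<r] @ xs \<and> 0 # map (\<lambda>x. x - int r) xs \<in> box (take (k - r) ((sum_list (take r ls) - int r) # drop r ls)))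
     \<longleftrightarrow> take r (rim n a) = map int [0..<r] \<and> 0 # map (\<lambda>x. x - int r) (drop r (rim n a)) \<in> box (take (k - r) ((sum_list (take r ls) - int r) # drop r ls))"
    using ex_split[of "rim n a" "map int [0..<r]" "\<lambda>xs. 0 # map (\<lambda>x. x - int r) xs \<in> box (take (k - r) ((sum_list (take r ls) - int r) # drop r ls))"]
    by simp
  then show ?thesis unfolding take_prefix using box2_aux by blast
qed

lemma pf_iff: "parking_function n a \<longleftrightarrow> s!0 = 1 \<and> (\<forall>i<k. s!i \<le> G (s!i) + 1)"
proof -
  have "(\<forall>x\<in>V. x \<le> G x + 1) \<longleftrightarrow> (\<forall>i<k. s!i \<le> G (s!i) + 1)"
    unfolding set_s[symmetric] k_def by (metis in_set_conv_nth)
  then show ?thesis using parking_char s0 by simp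
qed

lemma part2: "(parking_function n a \<and> run n a = r) \<longleftrightarrow>
   r \<le> k \<and> (\<forall>j<r. s!j = j+1) \<and> (r < k \<longrightarrow> s!r > r+1) \<and> (\<forall>j. r \<le> j \<longrightarrow> j < k \<longrightarrow> s!j \<le> G (s!j) + 1)"
proof
  assume h: "parking_function n a \<and> run n a = r"
  then have "1 \<in> V" "\<forall>i<k. s!i \<le> G (s!i) + 1" using pf_iff s0 by auto
  then show "r \<le> k \<and> (\<forall>j<r. s!j = j+1) \<and> (r < k \<longrightarrow> s!r > r+1) \<and> (\<forall>j. r \<le> j \<longrightarrow> j < k \<longrightarrow> s!j \<le> G (s!j) + 1)"
    using run_char h by auto
next
  assume h: "r \<le> k \<and> (\<forall>j<r. s!j = j+1) \<and> (r < k \<longrightarrow> s!r > r+1) \<and> (\<forall>j. r \<le> j \<longrightarrow> j < k \<longrightarrow> s!j \<le> G (s!j) + 1)"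
  have G0: "G (s!0) = 0" using ls_sum[of 0] k_pos by simp
  have "r \<noteq> 0"
  proof
    assume "r = 0"
    then have "s!0 > 1" "s!0 \<le> G (s!0) + 1" using h k_pos by auto
    then show False using G0 by simp
  qed
  then have s01: "s!0 = 1" using h by auto
  have "\<forall>i<k. s!i \<le> G (s!i) + 1"
  proof (intro allI impI)
    fix i assume "i < k"
    show "s!i \<le> G (s!i) + 1"
    proof (cases "i < r")
      case True then show ?thesis using h G_ge[OF \<open>i<k\<close>] by auto
    next
      case False then show ?thesis using h \<open>i<k\<close> by auto
    qed
  qed
  then have "parking_function n a" using pf_iff s01 by simp
  moreover have "run n a = r" using run_char s0 s01 h by auto
  ultimately show "parking_function n a \<and> run n a = r" by simp
qed

end

theorem lemma4p8:
  fixes n :: nat and As :: "nat set list" and a :: "nat \<Rightarrow> nat"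
  assumes "n > 0"
    and "ordered_partition n As"
    and "\<forall>j\<in>{1..n}. a j \<in> {1..n}"
    and "coim n a = As"
  shows "(parking_function n a \<longleftrightarrow> rim n a \<in> box (map (\<lambda>A. int (card A)) (butlast As))) \<and>
    (\<forall>r::nat. (parking_function n a \<and> run n a = r) \<longleftrightarrow>
       (\<exists>xs::int list. rim n a = map int [0..<r] @ xs \<and>
          0 # map (\<lambda>x. x - int r) xs \<in>
            box (take (length As - r)
                   ((sum_list (take r (map (\<lambda>A. int (card A)) (butlast As))) - int r)
                    # drop r (map (\<lambda>A. int (card A)) (butlast As))))))"
proof -
  interpret pfs n a using assms(1,3) by unfold_locales
  have lsA: "map (\<lambda>A. int (card A)) (butlast As) = ls" using assms(4) by (simp add: ls_def)
  have lA: "length As = k" using assms(4) coim_eq by (metis k_def length_map)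
  show ?thesis unfolding lsA lA using pf_iff box1 part2 box2 by simp
qed

end
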